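(* Let $\gamma=(\gamma_1,\gamma_2,\gamma_3):[a,b]\to E(1,1)$ be a Euclidean $C^2$-smooth regular curve and $t\in[a,b]$. Set $B=-e^{-\gamma_3}\dot\gamma_1+e^{\gamma_3}\dot\gamma_2$, $B'=\ddot\gamma_2e^{\gamma_3}+\dot\gamma_2\dot\gamma_3e^{\gamma_3}-\ddot\gamma_1e^{-\gamma_3}+\dot\gamma_1\dot\gamma_3e^{-\gamma_3}$, $S=\frac12B^2+\dot\gamma_3^2$, and $\omega(\dot\gamma(t))=-\frac{\sqrt2}{2}(e^{-\gamma_3}\dot\gamma_1+e^{\gamma_3}\dot\gamma_2)$. (i) If $\omega(\dot\gamma(t))\ne0$, then $k^\infty_\gamma=\lim_{L\to+\infty}k^L_\gamma$ exists and equals $\dfrac{\sqrt{\frac12B^2+\dot\gamma_3^2}}{|\omega(\dot\gamma(t))|}$. (ii) If $\omega(\dot\gamma(t))=0$ and $\frac{d}{dt}\omega(\dot\gamma(t))=0$, then the limit exists and $$k^\infty_\gamma=\left\{\frac{\ddot\gamma_3^2+\frac12 (B')^2}{S^2}-\frac{\big(\dot\gamma_3\ddot\gamma_3+\frac12BB'\big)^2}{S^3}\right\}^{1/2}.$$ (iii) If $\omega(\dot\gamma(t))=0$ and $\frac{d}{dt}\omega(\dot\gamma(t))\ne0$, then $\displaystyle\lim_{L\to+\infty}\frac{k^L_\gamma}{\sqrt L}=\frac{|\frac{d}{dt}\omega(\dot\gamma(t))|}{\frac12B^2+\dot\gamma_3^2}$.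
   Context: $E(1,1)$ (the group of rigid motions of the Minkowski plane) is modelled on $\mathbb R^3$ with coordinates $(x_1,x_2,x_3)$ and vector fields $X_1=\partial_{x_3}$, $X_2=\frac{1}{\sqrt2}(-e^{x_3}\partial_{x_1}+e^{-x_3}\partial_{x_2})$, $X_3=-\frac1{\sqrt2}(e^{x_3}\partial_{x_1}+e^{-x_3}\partial_{x_2})$, dual forms $\omega_1=dx_3$, $\omega_2=\frac1{\sqrt2}(-e^{-x_3}dx_1+e^{x_3}dx_2)$, $\omega=-\frac1{\sqrt2}(e^{-x_3}dx_1+e^{x_3}dx_2)$. For $L>0$, $g_L=\omega_1\otimes\omega_1+\omega_2\otimes\omega_2+L\,\omega\otimes\omega$ with Levi-Civita connection $\nabla^L$. Regular means $\dot\gamma\ne0$ everywhere. The curvature of $\gamma$ is $k^L_\gamma=\sqrt{\|\nabla^L_{\dot\gamma}\dot\gamma\|_L^2/\|\dot\gamma\|_L^4-\langle\nabla^L_{\dot\gamma}\dot\gamma,\dot\gamma\rangle_L^2/\|\dot\gamma\|_L^6}$ and $k^\infty_\gamma:=\lim_{L\to+\infty}k^L_\gamma$ when it exists. *)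

theory Defs
  imports "HOL-Analysis.Analysis"
begin

text \<open>Points of E(1,1) are modelled as vectors in real^3; component x$1, x$2, x$3
  are the coordinates x_1, x_2, x_3 (index type 3).
  Covector components of the dual forms omega_1, omega_2, omega at a point x.\<close>

definition om1 :: "real^3 \<Rightarrow> real^3" where
  "om1 x = (\<chi> i. if i = 3 then 1 else 0)"

definition om2 :: "real^3 \<Rightarrow> real^3" where
  "om2 x = (\<chi> i. if i = 1 then - exp (- (x$3)) / sqrt 2
                 else if i = 2 then exp (x$3) / sqrt 2 else 0)"

definition omw :: "real^3 \<Rightarrow> real^3" where
  "omw x = (\<chi> i. if i = 1 then - exp (- (x$3)) / sqrt 2
                 else if i = 2 then - exp (x$3) / sqrt 2 else 0)"

definition gmat :: "real \<Rightarrow> real^3 \<Rightarrow> real^3^3" where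
  "gmat L x = (\<chi> i j. om1 x $ i * om1 x $ j + om2 x $ i * om2 x $ j + L * (omw x $ i * omw x $ j))"

definition ginner :: "real \<Rightarrow> real^3 \<Rightarrow> real^3 \<Rightarrow> real^3 \<Rightarrow> real" where
  "ginner L x u v = u \<bullet> (gmat L x *v v)"

definition dg :: "real \<Rightarrow> real^3 \<Rightarrow> 3 \<Rightarrow> 3 \<Rightarrow> 3 \<Rightarrow> real" where
  "dg L x l i j = deriv (\<lambda>s. gmat L (x + s *\<^sub>R axis l 1) $ i $ j) 0"

definition christoffel :: "real \<Rightarrow> real^3 \<Rightarrow> 3 \<Rightarrow> 3 \<Rightarrow> 3 \<Rightarrow> real" where
  "christoffel L x k i j =
     (\<Sum>l\<in>UNIV. matrix_inv (gmat L x) $ k $ l * (dg L x i j l + dg L x j i l - dg L x l i j)) / 2"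

text \<open>Covariant derivative nabla^L_{dot gamma} dot gamma at a point p, with velocity v
  and (Euclidean) acceleration w.\<close>
definition covacc :: "real \<Rightarrow> real^3 \<Rightarrow> real^3 \<Rightarrow> real^3 \<Rightarrow> real^3" where
  "covacc L p v w = (\<chi> k. w $ k + (\<Sum>i\<in>UNIV. \<Sum>j\<in>UNIV. christoffel L p k i j * v $ i * v $ j))"

definition curvL :: "real \<Rightarrow> real^3 \<Rightarrow> real^3 \<Rightarrow> real^3 \<Rightarrow> real" where
  "curvL L p v w = (let N = covacc L p v w in
     sqrt (ginner L p N N / (ginner L p v v)^2 - (ginner L p N v)^2 / (ginner L p v v)^3))"

definition omega_val :: "real^3 \<Rightarrow> real^3 \<Rightarrow> real" where
  "omega_val p v = omw p \<bullet> v"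

end

theory Submission imports Defs begin

lemma three_ne[simp]: "(1::3) \<noteq> 2" "(1::3) \<noteq> 3" "(2::3) \<noteq> 3" "(2::3) \<noteq> 1" "(3::3) \<noteq> 1" "(3::3) \<noteq> 2"
  by (simp_all)

definition gA :: "real \<Rightarrow> 3 \<Rightarrow> 3 \<Rightarrow> real" where
  "gA L i j = (if i = 1 \<and> j = 1 then (1+L)/2 else 0)"
definition gC :: "real \<Rightarrow> 3 \<Rightarrow> 3 \<Rightarrow> real" where
  "gC L i j = (if (i = 1 \<and> j = 2) \<or> (i = 2 \<and> j = 1) then (L - 1)/2 else if i = 3 \<and> j = 3 then 1 else 0)"
definition gD :: "real \<Rightarrow> 3 \<Rightarrow> 3 \<Rightarrow> real" where
  "gD L i j = (if i = 2 \<and> j = 2 then (1+L)/2 else 0)"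

lemma expm2: "exp (- (z::real)) ^ 2 = exp (-2*z)" "exp z ^ 2 = exp (2*z)" "exp (-z) * exp z = 1"
  by (simp_all add: power2_eq_square flip: exp_add)

lemma gmat_expl: "gmat L y $ i $ j = gA L i j * exp (-2*(y$3)) + gC L i j + gD L i j * exp (2*(y$3))"
  using exhaust_3[of i] exhaust_3[of j]
  apply (auto simp: gmat_def om1_def om2_def omw_def gA_def gC_def gD_def)
  apply (simp_all add: algebra_simps exp_add[symmetric])
  done

lemma dg_expl: "dg L x l i j = (axis l 1 $ 3) * (2 * gD L i j * exp (2*(x$3)) - 2 * gA L i j * exp (-2*(x$3)))"
proof -
  let ?c = "axis l (1::real) $ 3"
  have "((\<lambda>s. gA L i j * exp (-2*(x$3 + s * ?c)) + gC L i j + gD L i j * exp (2*(x$3 + s * ?c)))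
     has_real_derivative ?c * (2 * gD L i j * exp (2*(x$3)) - 2 * gA L i j * exp (-2*(x$3)))) (at 0)"
    by (rule derivative_eq_intros refl | simp)+ (simp add: algebra_simps)
  then have "deriv (\<lambda>s. gA L i j * exp (-2*(x$3 + s * ?c)) + gC L i j + gD L i j * exp (2*(x$3 + s * ?c))) 0
     = ?c * (2 * gD L i j * exp (2*(x$3)) - 2 * gA L i j * exp (-2*(x$3)))"
    by (rule DERIV_imp_deriv)
  then show ?thesis unfolding dg_def gmat_expl by simp
qed

definition iA :: "real \<Rightarrow> 3 \<Rightarrow> 3 \<Rightarrow> real" where
  "iA L i j = (if i = 2 \<and> j = 2 then (1+L)/(2*L) else 0)"
definition iC :: "real \<Rightarrow> 3 \<Rightarrow> 3 \<Rightarrow> real" where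
  "iC L i j = (if (i = 1 \<and> j = 2) \<or> (i = 2 \<and> j = 1) then - (L - 1)/(2*L) else if i = 3 \<and> j = 3 then 1 else 0)"
definition iD :: "real \<Rightarrow> 3 \<Rightarrow> 3 \<Rightarrow> real" where
  "iD L i j = (if i = 1 \<and> j = 1 then (1+L)/(2*L) else 0)"
definition Ginv :: "real \<Rightarrow> real^3 \<Rightarrow> real^3^3" where
  "Ginv L y = (\<chi> i j. iA L i j * exp (-2*(y$3)) + iC L i j + iD L i j * exp (2*(y$3)))"

lemma matrix_inv_eq:
  fixes A M :: "real^'n^'n"
  assumes "A ** M = mat 1" "M ** A = mat 1"
  shows "matrix_inv A = M"
proof -
  have ex: "\<exists>A'. A ** A' = mat 1 \<and> A' ** A = mat 1" using assms by blast
  define A' where "A' = matrix_inv A"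
  have h: "A ** A' = mat 1 \<and> A' ** A = mat 1"
    unfolding A'_def matrix_inv_def using someI_ex[OF ex] .
  have "A' = A' ** (A ** M)" using assms by (simp add: matrix_mul_rid)
  also have "\<dots> = (A' ** A) ** M" by (simp add: matrix_mul_assoc)
  also have "\<dots> = M" using h by (simp add: matrix_mul_lid)
  finally show ?thesis unfolding A'_def .
qed

lemma e2: "exp (-2*(z::real)) * exp (2*z) = 1" "exp (2*(z::real)) * exp (-2*z) = 1"
  by (simp_all flip: exp_add)

lemma Ginv_ok:
  assumes L: "L > 0"
  shows "matrix_inv (gmat L y) = Ginv L y"
proof (rule matrix_inv_eq)
  show "gmat L y ** Ginv L y = mat 1"
    unfolding matrix_matrix_mult_def vec_eq_iff mat_def
    using exhaust_3 L by (auto simp: sum_3 gmat_expl Ginv_def gA_def gC_def gD_def iA_def iC_def iD_def exp_minus field_simps)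
  show "Ginv L y ** gmat L y = mat 1"
    unfolding matrix_matrix_mult_def vec_eq_iff mat_def
    using exhaust_3 L by (auto simp: sum_3 gmat_expl Ginv_def gA_def gC_def gD_def iA_def iC_def iD_def exp_minus field_simps)
qed

lemma expx: "exp (2*(z::real)) = exp z ^ 2" "exp (-2*z) = inverse (exp z ^ 2)" "exp (-z) = inverse (exp z)"
  by (simp_all add: exp_minus flip: exp_of_nat_mult)

lemma christ_expl:
  assumes L: "L > 0"
  shows "christoffel L p k i j = (\<Sum>l\<in>UNIV. Ginv L p $ k $ l * (dg L p i j l + dg L p j i l - dg L p l i j)) / 2"
  unfolding christoffel_def Ginv_ok[OF L] ..

lemma covacc1:
  assumes L: "L > 0"
  shows "covacc L p v w $ 1 = w $ 1 - (1+L)^2/(2*L) * v $ 1 * v $ 3 - (L^2-1) * (exp (p $ 3))^2/(2*L) * v $ 2 * v $ 3"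
  unfolding covacc_def christ_expl[OF L]
  apply (simp add: sum_3 dg_expl Ginv_def gA_def gD_def iA_def iC_def iD_def axis_def expx)
  using L by (simp add: field_simps power2_eq_square)

lemma covacc2:
  assumes L: "L > 0"
  shows "covacc L p v w $ 2 = w $ 2 + (L^2-1) * (exp (- (p $ 3)))^2/(2*L) * v $ 1 * v $ 3 + (1+L)^2/(2*L) * v $ 2 * v $ 3"
  unfolding covacc_def christ_expl[OF L]
  apply (simp add: sum_3 dg_expl Ginv_def gA_def gD_def iA_def iC_def iD_def axis_def expx)
  using L by (simp add: field_simps power2_eq_square)

lemma covacc3:
  assumes L: "L > 0"
  shows "covacc L p v w $ 3 = w $ 3 + (1+L) * (exp (- (p $ 3)))^2/2 * (v $ 1)^2 - (1+L) * (exp (p $ 3))^2/2 * (v $ 2)^2"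
  unfolding covacc_def christ_expl[OF L]
  apply (simp add: sum_3 dg_expl Ginv_def gA_def gD_def iA_def iC_def iD_def axis_def expx)
  using L by (simp add: field_simps power2_eq_square)

definition F2 :: "real^3 \<Rightarrow> real^3 \<Rightarrow> real" where
  "F2 p u = (- exp (- (p $ 3)) * u $ 1 + exp (p $ 3) * u $ 2) / sqrt 2"
definition F3 :: "real^3 \<Rightarrow> real^3 \<Rightarrow> real" where
  "F3 p u = - (exp (- (p $ 3)) * u $ 1 + exp (p $ 3) * u $ 2) / sqrt 2"

lemma omega_val_F3: "omega_val p u = F3 p u"
  by (simp add: omega_val_def F3_def omw_def inner_vec_def sum_3 field_simps)

lemma ginner_frame: "ginner L p u u' = u $ 3 * u' $ 3 + F2 p u * F2 p u' + L * (F3 p u * F3 p u')"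
  by (simp add: ginner_def gmat_def F2_def F3_def om1_def om2_def omw_def inner_vec_def matrix_vector_mult_def sum_3 field_simps)

lemma sq2: "sqrt 2 * sqrt 2 = (2::real)" by simp

lemma F23: "F2 p v * F3 p v = - ((- exp (- (p $ 3)) * v $ 1 + exp (p $ 3) * v $ 2) * (exp (- (p $ 3)) * v $ 1 + exp (p $ 3) * v $ 2)) / 2"
  unfolding F2_def F3_def by (simp add: divide_simps sq2) (simp add: algebra_simps)

lemma frameN1:
  assumes L: "L > 0"
  shows "covacc L p v w $ 3 = w $ 3 + (1 + L) * F2 p v * F3 p v"
  unfolding covacc3[OF L] mult.assoc F23
  by (simp add: field_simps power2_eq_square expx)

lemma frameN2:
  assumes L: "L > 0"
  shows "F2 p (covacc L p v w) = (w $ 2 * exp (p $ 3) + v $ 2 * v $ 3 * exp (p $ 3) - w $ 1 * exp (- (p $ 3)) + v $ 1 * v $ 3 * exp (- (p $ 3))) / sqrt 2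
     - L * v $ 3 * F3 p v"
  unfolding F2_def F3_def covacc1[OF L] covacc2[OF L]
  using L by (simp add: field_simps power2_eq_square expx)

lemma frameN3:
  assumes L: "L > 0"
  shows "F3 p (covacc L p v w) = (- (exp (- (p $ 3)) * w $ 1 + exp (p $ 3) * w $ 2) / sqrt 2 - v $ 3 * (- exp (- (p $ 3)) * v $ 1 + exp (p $ 3) * v $ 2) / sqrt 2)
     - v $ 3 * F2 p v / L"
  unfolding F2_def F3_def covacc1[OF L] covacc2[OF L]
  using L by (simp add: field_simps power2_eq_square expx)


definition Qf :: "real \<Rightarrow> real \<Rightarrow> real \<Rightarrow> real \<Rightarrow> real \<Rightarrow> real \<Rightarrow> real \<Rightarrow> real" where
  "Qf a1 a2 a3 d1 d2 d3 L =
    ((d1 + (1+L)*a2*a3)^2 + (d2 - L*a1*a3)^2 + L*(d3 - a1*a2/L)^2) / (a1^2+a2^2+L*a3^2)^2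
    - ((d1 + (1+L)*a2*a3)*a1 + (d2 - L*a1*a3)*a2 + L*(d3 - a1*a2/L)*a3)^2 / (a1^2+a2^2+L*a3^2)^3"

lemma inv_lim: "((\<lambda>L::real. 1/L) \<longlongrightarrow> 0) at_top"
  using tendsto_inverse_0_at_top[OF filterlim_ident] by (simp add: inverse_eq_divide)

lemma gen: fixes L::real assumes "L > 0"
  shows "((L*x1)^2 + (L*x2)^2 + L^2*y)/(L*z)^2 - (L*w)^2/(L*z)^3 = (x1^2+x2^2+y)/z^2 - (1/L)*w^2/z^3"
proof -
  have "((L*x1)^2 + (L*x2)^2 + L^2*y) = L^2 * (x1^2+x2^2+y)" by (simp add: algebra_simps power_mult_distrib)
  moreover have "(L*w)^2/(L*z)^3 = (1/L) * (w^2/z^3)" using assms by (simp add: power_mult_distrib field_simps power2_eq_square power3_eq_cube)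
  ultimately show ?thesis using assms by (simp add: power_mult_distrib)
qed

lemma limA:
  assumes a3: "a3 \<noteq> 0"
  shows "((\<lambda>L. sqrt (Qf a1 a2 a3 d1 d2 d3 L)) \<longlongrightarrow> sqrt (a1^2+a2^2) / \<bar>a3\<bar>) at_top"
proof -
  define c where "c = a1^2+a2^2"
  define m where "m = a1*d1+a2*d2"
  define f where "f = (\<lambda>u. ((d1*u + (u+1)*a2*a3)^2 + (d2*u - a1*a3)^2 + u*(d3 - a1*a2*u)^2) / (c*u + a3^2)^2
     - u*(m*u + a3*d3)^2 / (c*u+a3^2)^3)"
  have eq: "Qf a1 a2 a3 d1 d2 d3 L = f (1/L)" if "L > 0" for L
  proof -
    have p: "a1^2+a2^2+L*a3^2 = L * (c*(1/L) + a3^2)" using that by (simp add: c_def field_simps)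
    have q1: "d1 + (1+L)*a2*a3 = L*(d1*(1/L) + (1/L+1)*a2*a3)" using that by (simp add: field_simps)
    have q2: "d2 - L*a1*a3 = L*(d2*(1/L) - a1*a3)" using that by (simp add: field_simps)
    have q3: "(d1 + (1+L)*a2*a3)*a1 + (d2 - L*a1*a3)*a2 + L*(d3 - a1*a2/L)*a3 = L*(m*(1/L) + a3*d3)"
      using that by (simp add: m_def field_simps)
    have q4: "L*(d3 - a1*a2/L)^2 = L^2 * ((1/L) * (d3 - a1*a2*(1/L))^2)" using that by (simp add: power2_eq_square field_simps)
    have "Qf a1 a2 a3 d1 d2 d3 L = ((L*(d1*(1/L) + (1/L+1)*a2*a3))^2 + (L*(d2*(1/L) - a1*a3))^2 + L^2 * ((1/L) * (d3 - a1*a2*(1/L))^2))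
       / (L * (c*(1/L) + a3^2))^2 - (L*(m*(1/L) + a3*d3))^2 / (L * (c*(1/L) + a3^2))^3"
      unfolding Qf_def q3 by (simp only: q1 q2 q4 p)
    also have "\<dots> = f (1/L)" unfolding f_def gen[OF that] by (simp add: algebra_simps)
    finally show ?thesis .
  qed
  have "(f \<longlongrightarrow> f 0) (at 0)" unfolding f_def using a3 by (intro tendsto_intros) auto
  then have "((\<lambda>L. f (1/L)) \<longlongrightarrow> f 0) at_top"
    using tendsto_compose[OF _ inv_lim] by blast
  then have "((\<lambda>L. sqrt (f (1/L))) \<longlongrightarrow> sqrt (f 0)) at_top" by (rule tendsto_real_sqrt)
  moreover have "sqrt (f 0) = sqrt (a1^2+a2^2) / \<bar>a3\<bar>"
  proof -
    have "f 0 = (a1^2+a2^2) / a3^2" unfolding f_def using a3 by (simp add: field_simps power2_eq_square)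
    then show ?thesis by (simp add: real_sqrt_divide)
  qed
  moreover have "\<forall>\<^sub>F L in at_top. sqrt (f (1/L)) = sqrt (Qf a1 a2 a3 d1 d2 d3 L)"
    using eventually_gt_at_top[of 0] by eventually_elim (simp add: eq)
  ultimately show ?thesis using Lim_transform_eventually by fastforce
qed

lemma limB:
  assumes c: "a1^2+a2^2 > 0"
  shows "((\<lambda>L. sqrt (Qf a1 a2 0 d1 d2 0 L)) \<longlongrightarrow>
     sqrt ((d1^2+d2^2)/(a1^2+a2^2)^2 - (a1*d1+a2*d2)^2/(a1^2+a2^2)^3)) at_top"
proof -
  define f where "f = (\<lambda>u. (d1^2 + d2^2 + (a1*a2)^2*u)/(a1^2+a2^2)^2 - (a1*d1+a2*d2)^2/(a1^2+a2^2)^3)"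
  have eq: "Qf a1 a2 0 d1 d2 0 L = f (1/L)" if "L > 0" for L
    unfolding Qf_def f_def using that by (simp add: field_simps power2_eq_square)
  have "(f \<longlongrightarrow> f 0) (at 0)" unfolding f_def using c by (intro tendsto_intros) auto
  then have "((\<lambda>L. f (1/L)) \<longlongrightarrow> f 0) at_top"
    using tendsto_compose[OF _ inv_lim] by blast
  then have "((\<lambda>L. sqrt (f (1/L))) \<longlongrightarrow> sqrt (f 0)) at_top" by (rule tendsto_real_sqrt)
  moreover have "f 0 = (d1^2+d2^2)/(a1^2+a2^2)^2 - (a1*d1+a2*d2)^2/(a1^2+a2^2)^3"
    unfolding f_def by simp
  moreover have "\<forall>\<^sub>F L in at_top. sqrt (f (1/L)) = sqrt (Qf a1 a2 0 d1 d2 0 L)"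
    using eventually_gt_at_top[of 0] by eventually_elim (simp add: eq)
  ultimately show ?thesis using Lim_transform_eventually by fastforce
qed

lemma limC:
  assumes c: "a1^2+a2^2 > 0"
  shows "((\<lambda>L. sqrt (Qf a1 a2 0 d1 d2 d3 L) / sqrt L) \<longlongrightarrow> \<bar>d3\<bar> / (a1^2+a2^2)) at_top"
proof -
  define f where "f = (\<lambda>u. ((d1^2 + d2^2)*u + (d3 - a1*a2*u)^2)/(a1^2+a2^2)^2 - u*(a1*d1+a2*d2)^2/(a1^2+a2^2)^3)"
  have eq: "Qf a1 a2 0 d1 d2 d3 L / L = f (1/L)" if "L > 0" for L
  proof -
    define c where "c = a1^2+a2^2"
    have c0: "c > 0" using c c_def by simp
    have h1: "Qf a1 a2 0 d1 d2 d3 L = (d1^2 + d2^2 + L*(d3 - a1*a2/L)^2)/c^2 - (a1*d1 + a2*d2)^2/c^3"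
      by (simp add: Qf_def c_def algebra_simps)
    have h2: "f (1/L) = ((d1^2 + d2^2)*(1/L) + (d3 - a1*a2*(1/L))^2)/c^2 - (1/L)*(a1*d1+a2*d2)^2/c^3"
      by (simp add: f_def c_def)
    show ?thesis unfolding h1 h2 using that c0 by (simp add: field_simps)
  qed
  have "(f \<longlongrightarrow> f 0) (at 0)" unfolding f_def using c by (intro tendsto_intros) auto
  then have "((\<lambda>L. f (1/L)) \<longlongrightarrow> f 0) at_top"
    using tendsto_compose[OF _ inv_lim] by blast
  then have "((\<lambda>L. sqrt (f (1/L))) \<longlongrightarrow> sqrt (f 0)) at_top" by (rule tendsto_real_sqrt)
  moreover have "sqrt (f 0) = \<bar>d3\<bar> / (a1^2+a2^2)"
  proof -
    have "f 0 = (d3 / (a1^2+a2^2))^2" unfolding f_def by (simp add: power_divide)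
    then show ?thesis using c by simp
  qed
  moreover have "\<forall>\<^sub>F L in at_top. sqrt (f (1/L)) = sqrt (Qf a1 a2 0 d1 d2 d3 L) / sqrt L"
    using eventually_gt_at_top[of 0] by eventually_elim (simp add: eq[symmetric] real_sqrt_divide)
  ultimately show ?thesis using Lim_transform_eventually by fastforce
qed

lemma sq2d: "2 * x / sqrt 2 = sqrt 2 * (x::real)"
proof -
  have "2 / sqrt 2 = sqrt (2::real)" by (rule real_div_sqrt) simp
  then show ?thesis by (metis times_divide_eq_left mult.commute)
qed

lemma curvL_Q:
  assumes L: "L > 0"
  shows "curvL L p v w = sqrt (Qf (v $ 3) (F2 p v) (F3 p v) (w $ 3)
     ((w $ 2 * exp (p $ 3) + v $ 2 * v $ 3 * exp (p $ 3) - w $ 1 * exp (- (p $ 3)) + v $ 1 * v $ 3 * exp (- (p $ 3))) / sqrt 2)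
     ((- (exp (- (p $ 3)) * w $ 1 + exp (p $ 3) * w $ 2) / sqrt 2 - v $ 3 * (- exp (- (p $ 3)) * v $ 1 + exp (p $ 3) * v $ 2) / sqrt 2)) L)"
  unfolding curvL_def Let_def ginner_frame frameN1[OF L] frameN2[OF L] frameN3[OF L] Qf_def
  by (simp add: power2_eq_square power3_eq_cube algebra_simps)



theorem lemma5p3:
  fixes \<gamma> \<gamma>' \<gamma>'' :: "real \<Rightarrow> real^3" and a b t :: real
  assumes ab: "a < b"
    and d1: "\<And>s. s \<in> {a..b} \<Longrightarrow> (\<gamma> has_vector_derivative \<gamma>' s) (at s within {a..b})"
    and d2: "\<And>s. s \<in> {a..b} \<Longrightarrow> (\<gamma>' has_vector_derivative \<gamma>'' s) (at s within {a..b})"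
    and c2: "continuous_on {a..b} \<gamma>''"
    and reg: "\<And>s. s \<in> {a..b} \<Longrightarrow> \<gamma>' s \<noteq> 0"
    and t: "t \<in> {a..b}"
  defines "k \<equiv> (\<lambda>L. curvL L (\<gamma> t) (\<gamma>' t) (\<gamma>'' t))"
    and "B \<equiv> - exp (- (\<gamma> t $ 3)) * (\<gamma>' t $ 1) + exp (\<gamma> t $ 3) * (\<gamma>' t $ 2)"
    and "B' \<equiv> \<gamma>'' t $ 2 * exp (\<gamma> t $ 3) + \<gamma>' t $ 2 * \<gamma>' t $ 3 * exp (\<gamma> t $ 3)
              - \<gamma>'' t $ 1 * exp (- (\<gamma> t $ 3)) + \<gamma>' t $ 1 * \<gamma>' t $ 3 * exp (- (\<gamma> t $ 3))"
    and "w \<equiv> omega_val (\<gamma> t) (\<gamma>' t)"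
    and "dw \<equiv> vector_derivative (\<lambda>s. omega_val (\<gamma> s) (\<gamma>' s)) (at t within {a..b})"
  shows "(w \<noteq> 0 \<longrightarrow> (k \<longlongrightarrow> sqrt (B^2 / 2 + (\<gamma>' t $ 3)^2) / \<bar>w\<bar>) at_top)
       \<and> (w = 0 \<and> dw = 0 \<longrightarrow>
           (k \<longlongrightarrow> sqrt (((\<gamma>'' t $ 3)^2 + B'^2 / 2) / (B^2 / 2 + (\<gamma>' t $ 3)^2)^2
                   - (\<gamma>' t $ 3 * \<gamma>'' t $ 3 + B * B' / 2)^2 / (B^2 / 2 + (\<gamma>' t $ 3)^2)^3)) at_top)
       \<and> (w = 0 \<and> dw \<noteq> 0 \<longrightarrow>
           ((\<lambda>L. k L / sqrt L) \<longlongrightarrow> \<bar>dw\<bar> / (B^2 / 2 + (\<gamma>' t $ 3)^2)) at_top)"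
  proof -
  define p where "p = \<gamma> t"
  define v where "v = \<gamma>' t"
  define ww where "ww = \<gamma>'' t"
  define E where "E = exp (p $ 3)"
  define e where "e = exp (- (p $ 3))"
  define D3 where "D3 = (- (e * ww $ 1 + E * ww $ 2) / sqrt 2 - v $ 3 * (- e * v $ 1 + E * v $ 2) / sqrt 2)"
  have Bv: "B = - e * v $ 1 + E * v $ 2" unfolding B_def e_def E_def p_def v_def by simp
  have B'v: "B' = ww $ 2 * E + v $ 2 * v $ 3 * E - ww $ 1 * e + v $ 1 * v $ 3 * e"
    unfolding B'_def e_def E_def p_def v_def ww_def by simp
  have a2: "F2 p v = B / sqrt 2" unfolding F2_def Bv e_def E_def by simp
  have a3: "F3 p v = w" unfolding w_def omega_val_F3 p_def v_def ..
  have a2sq: "(F2 p v)^2 = B^2/2" unfolding a2 by (simp add: power_divide)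
  have kQ: "\<forall>\<^sub>F L in at_top. sqrt (Qf (v $ 3) (F2 p v) w (ww $ 3) (B' / sqrt 2) D3 L) = k L"
    using eventually_gt_at_top[of 0]
  proof eventually_elim
    case (elim L)
    have "k L = sqrt (Qf (v $ 3) (F2 p v) w (ww $ 3) (B' / sqrt 2) D3 L)"
      unfolding k_def curvL_Q[OF elim] a3[symmetric] B'v D3_def
      by (simp add: p_def v_def ww_def e_def E_def)
    then show ?case by simp
  qed
  have cpos: "B^2/2 + (v $ 3)^2 > 0" if "w = 0"
  proof (rule ccontr)
    assume "\<not> ?thesis"
    then have "B^2 = 0" "(v $ 3)^2 = 0"
      using zero_le_power2[of B] zero_le_power2[of "v $ 3"] by linarith+
    then have "B = 0" "v $ 3 = 0" by simp_all
    moreover have "e * v $ 1 + E * v $ 2 = 0" using that a3 unfolding F3_def e_def E_def by simp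
    ultimately have "e * v $ 1 = 0" "E * v $ 2 = 0" unfolding Bv by linarith+
    then have "v $ 1 = 0" "v $ 2 = 0" unfolding e_def E_def by auto
    with \<open>v $ 3 = 0\<close> have "v = 0" unfolding vec_eq_iff using exhaust_3 by (metis zero_index)
    with reg[OF t] show False unfolding v_def by simp
  qed
  have dwD: "dw = D3"
  proof -
    have comp: "((\<lambda>s. \<gamma> s $ i) has_real_derivative \<gamma>' t $ i) (at t within {a..b})"
         "((\<lambda>s. \<gamma>' s $ i) has_real_derivative \<gamma>'' t $ i) (at t within {a..b})" for i
      using bounded_linear.has_vector_derivative[OF bounded_linear_vec_nth d1[OF t], of i]
        bounded_linear.has_vector_derivative[OF bounded_linear_vec_nth d2[OF t], of i]
      by (simp_all add: has_real_derivative_iff_has_vector_derivative)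
    have "((\<lambda>s. - (exp (- (\<gamma> s $ 3)) * \<gamma>' s $ 1 + exp (\<gamma> s $ 3) * \<gamma>' s $ 2) / sqrt 2) has_real_derivative D3) (at t within {a..b})"
      unfolding D3_def e_def E_def p_def v_def ww_def
      by (rule derivative_eq_intros comp refl | simp)+ (simp add: algebra_simps add_divide_distrib diff_divide_distrib sq2d)
    then have "((\<lambda>s. omega_val (\<gamma> s) (\<gamma>' s)) has_vector_derivative D3) (at t within {a..b})"
      by (simp add: omega_val_F3 F3_def has_real_derivative_iff_has_vector_derivative)
    then show ?thesis unfolding dw_def using vector_derivative_within_closed_interval[OF ab t] by blast
  qed
  show ?thesis
  proof (intro conjI impI)
    assume "w \<noteq> 0"
    from limA[where ?a1.0="v $ 3" and ?a2.0="F2 p v" and ?d1.0="ww $ 3" and ?d2.0="B' / sqrt 2" and ?d3.0=D3, OF this]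
    have "((\<lambda>L. sqrt (Qf (v $ 3) (F2 p v) w (ww $ 3) (B' / sqrt 2) D3 L)) \<longlongrightarrow> sqrt (B^2 / 2 + (\<gamma>' t $ 3)^2) / \<bar>w\<bar>) at_top"
      unfolding a2sq by (simp add: v_def add.commute)
    then show "(k \<longlongrightarrow> sqrt (B^2 / 2 + (\<gamma>' t $ 3)^2) / \<bar>w\<bar>) at_top"
      using kQ by (rule Lim_transform_eventually)
  next
    assume h: "w = 0 \<and> dw = 0"
    have c: "(v $ 3)^2 + (F2 p v)^2 > 0" using cpos h a2sq by simp
    from limB[where ?d1.0="ww $ 3" and ?d2.0="B' / sqrt 2", OF c] h dwD
    have "((\<lambda>L. sqrt (Qf (v $ 3) (F2 p v) w (ww $ 3) (B' / sqrt 2) D3 L)) \<longlongrightarrow>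
       sqrt (((\<gamma>'' t $ 3)^2 + B'^2 / 2) / (B^2 / 2 + (\<gamma>' t $ 3)^2)^2
                   - (\<gamma>' t $ 3 * \<gamma>'' t $ 3 + B * B' / 2)^2 / (B^2 / 2 + (\<gamma>' t $ 3)^2)^3)) at_top"
      unfolding a2sq a2 by (simp add: v_def ww_def add.commute power_divide mult.commute)
    then show "(k \<longlongrightarrow> sqrt (((\<gamma>'' t $ 3)^2 + B'^2 / 2) / (B^2 / 2 + (\<gamma>' t $ 3)^2)^2
                   - (\<gamma>' t $ 3 * \<gamma>'' t $ 3 + B * B' / 2)^2 / (B^2 / 2 + (\<gamma>' t $ 3)^2)^3)) at_top"
      using kQ by (rule Lim_transform_eventually)
  next
    assume h: "w = 0 \<and> dw \<noteq> 0"
    have c: "(v $ 3)^2 + (F2 p v)^2 > 0" using cpos h a2sq by simp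
    from limC[where ?d1.0="ww $ 3" and ?d2.0="B' / sqrt 2" and ?d3.0=D3, OF c] h dwD
    have "((\<lambda>L. sqrt (Qf (v $ 3) (F2 p v) w (ww $ 3) (B' / sqrt 2) D3 L) / sqrt L) \<longlongrightarrow> \<bar>dw\<bar> / (B^2 / 2 + (\<gamma>' t $ 3)^2)) at_top"
      unfolding a2sq by (simp add: v_def add.commute)
    moreover have "\<forall>\<^sub>F L in at_top. sqrt (Qf (v $ 3) (F2 p v) w (ww $ 3) (B' / sqrt 2) D3 L) / sqrt L = k L / sqrt L"
      using kQ by eventually_elim simp
    ultimately show "((\<lambda>L. k L / sqrt L) \<longlongrightarrow> \<bar>dw\<bar> / (B^2 / 2 + (\<gamma>' t $ 3)^2)) at_top"
      by (rule Lim_transform_eventually)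
  qed
qed

end
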